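(* Let $I\subset\mathbb{R}$ be an open interval, $W\subset I$ a countable dense subset, $\mathrm{gr}\colon W\to\mathbb{N}$ a grading with finite fibers, $K>1$, and give the fractured interval $\check I$ the division metric with steepness $K$. Suppose that for every $\alpha>0$ there is $M>0$ with $\mathrm{gap}(r)\ge Mr^\alpha$ for all $r>0$. If $f$ is a Hölder function from $\check I$ to a metric space such that $f(w^L)=f(w^R)$ for all $w\in W$, then $f$ is constant.
   Context: The divided interval of $I$ at $W$ is $\hat I = \{w^{L}, \hat w, w^{R} : w\in W\}\sqcup (I\smallsetminus W)$, with $\pi\colon\hat I\to I$ sending $w^L,\hat w,w^R$ to $w$ and fixing $I\smallsetminus W$, totally ordered so that $\pi$ is order preserving and $w^L<\hat w<w^R$. For $a,b\in\hat I\cup\{\pm\infty\}$, $(a,b)=\{s: a<s<b\}$; basis intervals are the nonempty $(a,b)$ other than those with $a=w^L$ or $b=w^R$, and they generate the topology. The fractured interval is $\check I=\hat I\smallsetminus\{\hat w:w\in W\}$. The height of $\hat w$ is $K^{-\mathrm{gr}(w)}$, all other points have height $0$; the division metric is $d(a,b)=$ maximum height of points of $(a,b)\subset\hat I$ for $a<b$ in $\check I$. Let $W_{\ge r}=\{w\in W: K^{-\mathrm{gr}(w)}\ge r\}$ and $\mathrm{gap}(r)$ be the minimum Euclidean distance between distinct points of $W_{\ge r}$ (with $\mathrm{gap}(r)=+\infty$ if $W_{\ge r}$ has fewer than two points). Hölder means Hölder with some exponent $\nu>0$ with respect to $d$. *)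

theory Defs
  imports "HOL-Analysis.Analysis"
begin

text \<open>Points of the divided interval: for w in W the three points w^L, hat w, w^R;
  for x in I - W the point x itself.\<close>
datatype dpt = WL real | WH real | WR real | Pt real

fun proj :: "dpt \<Rightarrow> real" where
  "proj (WL x) = x" | "proj (WH x) = x" | "proj (WR x) = x" | "proj (Pt x) = x"

fun tag :: "dpt \<Rightarrow> int" where
  "tag (WL x) = -1" | "tag (WH x) = 0" | "tag (WR x) = 1" | "tag (Pt x) = 0"

definition dless :: "dpt \<Rightarrow> dpt \<Rightarrow> bool" where
  "dless a b \<longleftrightarrow> proj a < proj b \<or> (proj a = proj b \<and> tag a < tag b)"

definition divided_interval :: "real set \<Rightarrow> real set \<Rightarrow> dpt set" where
  "divided_interval I W = (\<Union>w\<in>W. {WL w, WH w, WR w}) \<union> Pt ` (I - W)"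

definition fractured_interval :: "real set \<Rightarrow> real set \<Rightarrow> dpt set" where
  "fractured_interval I W = divided_interval I W - WH ` W"

fun height :: "(real \<Rightarrow> nat) \<Rightarrow> real \<Rightarrow> dpt \<Rightarrow> real" where
  "height gr K (WH w) = K powr (- real (gr w))"
| "height gr K _ = 0"

definition division_metric ::
  "real set \<Rightarrow> real set \<Rightarrow> (real \<Rightarrow> nat) \<Rightarrow> real \<Rightarrow> dpt \<Rightarrow> dpt \<Rightarrow> real" where
  "division_metric I W gr K a b =
     Sup (insert 0 {height gr K p | p. p \<in> divided_interval I W \<and>
        ((dless a p \<and> dless p b) \<or> (dless b p \<and> dless p a))})"

definition W_ge :: "real set \<Rightarrow> (real \<Rightarrow> nat) \<Rightarrow> real \<Rightarrow> real \<Rightarrow> real set" where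
  "W_ge W gr K r = {w \<in> W. K powr (- real (gr w)) \<ge> r}"

text \<open>gap(r): minimum distance between distinct points of W_{>=r}; +infinity if there are
  fewer than two such points (Inf of the empty set in ereal).\<close>
definition gap :: "real set \<Rightarrow> (real \<Rightarrow> nat) \<Rightarrow> real \<Rightarrow> real \<Rightarrow> ereal" where
  "gap W gr K r = Inf {ereal \<bar>u - v\<bar> | u v. u \<in> W_ge W gr K r \<and> v \<in> W_ge W gr K r \<and> u \<noteq> v}"

definition holder_on :: "'a set \<Rightarrow> ('a \<Rightarrow> 'a \<Rightarrow> real) \<Rightarrow> ('a \<Rightarrow> 'b::metric_space) \<Rightarrow> bool" where
  "holder_on S d f \<longleftrightarrow> (\<exists>\<nu>>0. \<exists>C. \<forall>a\<in>S. \<forall>b\<in>S. dist (f a) (f b) \<le> C * d a b powr \<nu>)"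

end

theory Submission
  imports Defs
begin

definition Rr :: "real set \<Rightarrow> real \<Rightarrow> dpt" where
  "Rr W x = (if x \<in> W then WR x else Pt x)"
definition Ll :: "real set \<Rightarrow> real \<Rightarrow> dpt" where
  "Ll W x = (if x \<in> W then WL x else Pt x)"

lemma WH_div: "WH u \<in> divided_interval I W \<Longrightarrow> u \<in> W"
  by (auto simp: divided_interval_def)

lemma dm_bound:
  assumes "x < y" "r > 0" "\<forall>u\<in>W. x<u \<and> u<y \<longrightarrow> K powr (- real (gr u)) < r"
  shows "division_metric I W gr K (Rr W x) (Ll W y) \<le> r \<and> 0 \<le> division_metric I W gr K (Rr W x) (Ll W y)"
proof -
  define S where "S = {height gr K p | p. p \<in> divided_interval I W \<and>
        ((dless (Rr W x) p \<and> dless p (Ll W y)) \<or> (dless (Ll W y) p \<and> dless p (Rr W x)))}"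
  have S: "\<forall>s\<in>S. s \<le> r"
  proof
    fix s assume "s \<in> S"
    then obtain p where p: "s = height gr K p" "p \<in> divided_interval I W"
      "(dless (Rr W x) p \<and> dless p (Ll W y)) \<or> (dless (Ll W y) p \<and> dless p (Rr W x))"
      unfolding S_def by blast
    show "s \<le> r"
    proof (cases p)
      case (WH u)
      have uW: "u \<in> W" using p(2) WH WH_div by blast
      have "x < u \<and> u < y" using p(3) assms(1) uW unfolding WH dless_def Rr_def Ll_def
        by (auto split: if_splits)
      then show ?thesis using assms(3) uW p(1) WH by force
    qed (use p(1) assms(2) in auto)
  qed
  have le: "Sup (insert 0 S) \<le> r" by (rule cSup_least) (use S assms(2) in auto)
  have bdd: "bdd_above (insert 0 S)" using S assms(2) by (auto intro!: bdd_aboveI[of _ r])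
  have ge: "0 \<le> Sup (insert 0 S)" by (rule cSup_upper[OF _ bdd]) auto
  show ?thesis using le ge unfolding division_metric_def S_def by simp
qed


lemma floor_eq_close: "\<lfloor>a::real\<rfloor> = \<lfloor>b\<rfloor> \<Longrightarrow> \<bar>a - b\<bar> < 1"
  by linarith

lemma count_lemma:
  fixes S :: "real set"
  assumes "S \<subseteq> {x..y}" "G > 0" "x \<le> y" "\<forall>u\<in>S. \<forall>v\<in>S. u \<noteq> v \<longrightarrow> G \<le> \<bar>u - v\<bar>"
  shows "finite S \<and> real (card S) \<le> (y - x) / G + 1"
proof -
  define h where "h u = nat \<lfloor>(u - x) / G\<rfloor>" for u
  have inj: "inj_on h S"
  proof (rule inj_onI, rule ccontr)
    fix u v assume uv: "u \<in> S" "v \<in> S" "h u = h v" "u \<noteq> v"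
    have "0 \<le> (u - x) / G" "0 \<le> (v - x) / G" using uv(1,2) assms(1,2) by auto
    hence "\<lfloor>(u - x) / G\<rfloor> = \<lfloor>(v - x) / G\<rfloor>" using uv(3) unfolding h_def
      by (metis eq_nat_nat_iff zero_le_floor)
    hence "\<bar>(u - x) / G - (v - x) / G\<bar> < 1" by (rule floor_eq_close)
    also have "(u - x) / G - (v - x) / G = (u - v) / G" by (simp add: diff_divide_distrib)
    finally have "\<bar>u - v\<bar> < G" using assms(2) by (simp add: abs_divide)
    thus False using assms(4) uv by force
  qed
  have img: "h ` S \<subseteq> {0..nat \<lfloor>(y - x) / G\<rfloor>}"
  proof
    fix z assume "z \<in> h ` S"
    then obtain u where u: "u \<in> S" "z = h u" by blast
    have "(u - x) / G \<le> (y - x) / G" using u(1) assms(1,2) by (auto intro!: divide_right_mono)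
    hence "\<lfloor>(u - x) / G\<rfloor> \<le> \<lfloor>(y - x) / G\<rfloor>" by (rule floor_mono)
    thus "z \<in> {0..nat \<lfloor>(y - x) / G\<rfloor>}" using u unfolding h_def by (auto intro: nat_mono)
  qed
  have fin: "finite S" using inj_on_finite[OF inj img] by simp
  have "card S = card (h ` S)" using card_image[OF inj] by simp
  also have "\<dots> \<le> card {0..nat \<lfloor>(y - x) / G\<rfloor>}" by (rule card_mono[OF _ img]) simp
  also have "\<dots> = nat \<lfloor>(y - x) / G\<rfloor> + 1" by simp
  finally have c: "real (card S) \<le> real (nat \<lfloor>(y - x) / G\<rfloor>) + 1" by linarith
  have "0 \<le> (y - x) / G" using assms by simp
  hence "real (nat \<lfloor>(y - x) / G\<rfloor>) \<le> (y - x) / G" by linarith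
  thus ?thesis using fin c by linarith
qed


theorem corollary3p11:
  fixes I W :: "real set" and gr :: "real \<Rightarrow> nat" and K :: real
    and f :: "dpt \<Rightarrow> 'b::metric_space"
  assumes "open I" and "is_interval I"
    and "countable W" and "W \<subseteq> I" and "I \<subseteq> closure W"
    and "\<forall>n. finite {w \<in> W. gr w = n}"
    and "K > 1"
    and "\<forall>\<alpha>>0. \<exists>M>0. \<forall>r>0. gap W gr K r \<ge> ereal (M * r powr \<alpha>)"
    and "holder_on (fractured_interval I W) (division_metric I W gr K) f"
    and "\<forall>w\<in>W. f (WL w) = f (WR w)"
  shows "\<exists>c. \<forall>a\<in>fractured_interval I W. f a = c"
proof -
  define F where "F = fractured_interval I W"
  define dm where "dm = division_metric I W gr K"
  obtain \<nu> C0 where \<nu>: "\<nu> > 0" and hol0: "\<forall>a\<in>F. \<forall>b\<in>F. dist (f a) (f b) \<le> C0 * dm a b powr \<nu>"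
    using assms(9) unfolding holder_on_def F_def dm_def by blast
  define C where "C = max C0 0"
  have C: "C \<ge> 0" unfolding C_def by simp
  have hol: "dist (f a) (f b) \<le> C * dm a b powr \<nu>" if "a \<in> F" "b \<in> F" for a b
  proof -
    have "C0 * dm a b powr \<nu> \<le> C * dm a b powr \<nu>"
      unfolding C_def by (intro mult_right_mono) auto
    thus ?thesis using hol0 that by fastforce
  qed
  have inF: "Rr W x \<in> F \<and> Ll W x \<in> F" if "x \<in> I" for x
    using that unfolding F_def fractured_interval_def divided_interval_def Rr_def Ll_def by auto
  have eqRL: "f (Rr W x) = f (Ll W x)" for x
    using assms(10) unfolding Rr_def Ll_def by auto
  have inI: "u \<in> I" if "x \<in> I" "y \<in> I" "x \<le> u" "u \<le> y" for x y u
    using assms(2) that unfolding is_interval_1 by blast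
  have base: "dist (f (Rr W x)) (f (Ll W y)) \<le> C * r powr \<nu>"
    if "x < y" "x \<in> I" "y \<in> I" "r > 0" "\<forall>u\<in>W. x<u \<and> u<y \<longrightarrow> K powr (- real (gr u)) < r" for x y r
  proof -
    have d: "dm (Rr W x) (Ll W y) \<le> r \<and> 0 \<le> dm (Rr W x) (Ll W y)"
      unfolding dm_def using dm_bound[OF that(1,4,5)] by blast
    have "dist (f (Rr W x)) (f (Ll W y)) \<le> C * dm (Rr W x) (Ll W y) powr \<nu>"
      using hol inF that by blast
    also have "\<dots> \<le> C * r powr \<nu>"
      using d \<nu> C by (intro mult_left_mono powr_mono2) auto
    finally show ?thesis .
  qed
  define S where "S r x y = {u \<in> W_ge W gr K r. x < u \<and> u < y}" for r x y
  have chain: "\<forall>x y. finite (S r x y) \<longrightarrow> card (S r x y) = n \<longrightarrow> x < y \<longrightarrow> x \<in> I \<longrightarrow> y \<in> I \<longrightarrow>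
       dist (f (Rr W x)) (f (Ll W y)) \<le> (real n + 1) * (C * r powr \<nu>)" if r: "r > 0" for r n
  proof (induction n)
    case 0
    show ?case
    proof (intro allI impI)
      fix x y assume h: "finite (S r x y)" "card (S r x y) = 0" "x < y" "x \<in> I" "y \<in> I"
      hence "S r x y = {}" by simp
      hence "\<forall>u\<in>W. x<u \<and> u<y \<longrightarrow> K powr (- real (gr u)) < r"
        unfolding S_def W_ge_def by force
      thus "dist (f (Rr W x)) (f (Ll W y)) \<le> (real 0 + 1) * (C * r powr \<nu>)"
        using base[OF h(3,4,5) r] by simp
    qed
  next
    case (Suc n)
    show ?case
    proof (intro allI impI)
      fix x y assume h: "finite (S r x y)" "card (S r x y) = Suc n" "x < y" "x \<in> I" "y \<in> I"
      hence ne: "S r x y \<noteq> {}" by auto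
      define u where "u = Max (S r x y)"
      have uS: "u \<in> S r x y" using Max_in[OF h(1) ne] u_def by simp
      hence u: "x < u" "u < y" "u \<in> W" unfolding S_def W_ge_def by auto
      have uI: "u \<in> I" using inI[OF h(4,5)] u by simp
      have le: "v \<le> u" if "v \<in> S r x y" for v using Max_ge[OF h(1) that] u_def by simp
      have S1: "S r x u = S r x y - {u}"
        using le u uS unfolding S_def by fastforce
      have c1: "card (S r x u) = n" "finite (S r x u)" using S1 h(1,2) uS by auto
      have IH: "dist (f (Rr W x)) (f (Ll W u)) \<le> (real n + 1) * (C * r powr \<nu>)"
        using Suc.IH c1 u(1) h(4) uI by blast
      have "S r u y = {}"
        using le u unfolding S_def by fastforce
      hence "\<forall>v\<in>W. u<v \<and> v<y \<longrightarrow> K powr (- real (gr v)) < r"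
        unfolding S_def W_ge_def by force
      hence B: "dist (f (Rr W u)) (f (Ll W y)) \<le> C * r powr \<nu>"
        using base[OF u(2) uI h(5) r] by simp
      have "dist (f (Rr W x)) (f (Ll W y)) \<le> dist (f (Rr W x)) (f (Ll W u)) + dist (f (Ll W u)) (f (Ll W y))"
        by (rule dist_triangle)
      also have "\<dots> \<le> (real n + 1) * (C * r powr \<nu>) + C * r powr \<nu>"
        using IH B eqRL[of u] by simp
      finally show "dist (f (Rr W x)) (f (Ll W y)) \<le> (real (Suc n) + 1) * (C * r powr \<nu>)"
        by (simp add: algebra_simps)
    qed
  qed
  obtain M where M: "M > 0" "\<forall>r>0. gap W gr K r \<ge> ereal (M * r powr (\<nu>/2))"
    using assms(8) \<nu> by (meson half_gt_zero)
  have sep: "M * r powr (\<nu>/2) \<le> \<bar>u - v\<bar>"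
    if "r > 0" "u \<in> W_ge W gr K r" "v \<in> W_ge W gr K r" "u \<noteq> v" for r u v
  proof -
    have "gap W gr K r \<le> ereal \<bar>u - v\<bar>" unfolding gap_def
      by (rule Inf_lower) (use that in blast)
    thus ?thesis using M(2) that(1) order_trans by fastforce
  qed
  have main: "f (Ll W x) = f (Ll W y)" if xy: "x < y" "x \<in> I" "y \<in> I" for x y
  proof -
    define D where "D = dist (f (Rr W x)) (f (Ll W y))"
    define B where "B r = C * (y - x) / M * r powr (\<nu>/2) + 2 * C * r powr \<nu>" for r
    have bound: "D \<le> B r" if r: "r > 0" for r
    proof -
      have G: "M * r powr (\<nu>/2) > 0" using M r by simp
      have cnt: "finite (S r x y) \<and> real (card (S r x y)) \<le> (y - x) / (M * r powr (\<nu>/2)) + 1"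
        by (rule count_lemma[OF _ G]) (use xy sep r in \<open>auto simp: S_def\<close>)
      have "D \<le> (real (card (S r x y)) + 1) * (C * r powr \<nu>)"
        unfolding D_def using chain[OF r, of "card (S r x y)"] cnt xy by blast
      also have "\<dots> \<le> ((y - x) / (M * r powr (\<nu>/2)) + 2) * (C * r powr \<nu>)"
        using cnt C by (intro mult_right_mono) auto
      also have "\<dots> = B r"
      proof -
        have "r powr \<nu> = r powr (\<nu>/2) * r powr (\<nu>/2)"
          by (simp add: powr_add[symmetric])
        thus ?thesis unfolding B_def using M r by (simp add: field_simps)
      qed
      finally show ?thesis .
    qed
    have lim0: "((\<lambda>r. r powr a) \<longlongrightarrow> 0) (at_right 0)" if "a > 0" for a :: real
    proof (rule tendsto_zero_powrI)
      show "\<forall>\<^sub>F x in at_right 0. 0 \<le> (x::real)"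
        using eventually_at_right_less[of "0::real"] by (rule eventually_mono) simp
    qed (auto intro: tendsto_ident_at simp: that)
    have limB: "(B \<longlongrightarrow> 0) (at_right 0)"
    proof -
      have "((\<lambda>r. C * (y - x) / M * r powr (\<nu>/2) + 2 * C * r powr \<nu>) \<longlongrightarrow>
              C * (y - x) / M * 0 + 2 * C * 0) (at_right 0)"
        by (intro tendsto_intros lim0) (use \<nu> in auto)
      thus ?thesis unfolding B_def by simp
    qed
    have "D \<le> 0"
    proof -
      have ev: "\<forall>\<^sub>F r in at_right 0. D \<le> B r"
        using eventually_at_right_less[of "0::real"] by (rule eventually_mono) (rule bound)
      show ?thesis
        using tendsto_le[OF trivial_limit_at_right_real limB tendsto_const ev] .
    qed
    hence "D = 0" unfolding D_def by simp
    thus ?thesis unfolding D_def using eqRL[of x] by simp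
  qed
  have rep: "f a = f (Ll W (proj a)) \<and> proj a \<in> I" if "a \<in> F" for a
    using that assms(4) assms(10) unfolding F_def fractured_interval_def divided_interval_def Ll_def
    by (auto)
  show ?thesis
  proof (cases "F = {}")
    case True thus ?thesis unfolding F_def by auto
  next
    case False
    then obtain a0 where a0: "a0 \<in> F" by blast
    have "f a = f a0" if "a \<in> F" for a
    proof -
      have "f (Ll W (proj a)) = f (Ll W (proj a0))"
        using main rep[OF that] rep[OF a0] by (metis linorder_neqE_linordered_idom)
      thus ?thesis using rep[OF that] rep[OF a0] by simp
    qed
    thus ?thesis unfolding F_def by blast
  qed
qed

end
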